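(* Let the data $y\in\mathbb{R}^n$, $X\in\mathbb{R}^{n\times p}$, $Z\in\mathbb{R}^{n\times q}$ be fixed, with $Z^TZ$ and $X^TP_ZX$ non-singular, and thin SVDs $X=U_X\Sigma_XV_X^T$, $Z=U_Z\Sigma_ZV_Z^T$. Let $\widehat e=y-X\widehat\beta_{2SLS}$ with $\widehat\beta_{2SLS}=(X^TP_ZX)^{-1}X^TP_Zy$, and let $\Pi\in\mathbb{R}^{m\times n}$ be random. Given $\varepsilon_1,\varepsilon_2,\varepsilon_3,\delta\in(0,1/2)$, suppose that jointly with probability at least $1-\delta$: $\|U_Z^T\Pi^T\Pi U_Z-I_q\|_2\le\varepsilon_1$, $\|U_Z^T\Pi^T\Pi U_X-U_Z^TU_X\|_2\le\varepsilon_2$, $\|U_Z^T\Pi^T\Pi\widehat e-U_Z^T\widehat e\|\le\varepsilon_3\|\widehat e\|$; and that $\sigma_{\min}^2(U_Z^TU_X)\ge 2f_1(\varepsilon_1,\varepsilon_2)$. Let $\widetilde A:=U_X^T\Pi^T\Pi U_Z(U_Z^T\Pi^T\Pi U_Z)^{-1}U_Z^T\Pi^T\Pi U_X$. Then with probability at least $1-\delta$, $\sigma_{\min}(\widetilde A)\ge\frac12\sigma_{\min}^2(U_Z^TU_X)$.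
   Context: $P_Z=Z(Z^TZ)^{-1}Z^T$; $f_1(\varepsilon_1,\varepsilon_2):=[\varepsilon_1+\varepsilon_2(\varepsilon_2+2)]/(1-\varepsilon_1)$. $\|\cdot\|_2$ is the spectral norm, $\sigma_{\min}$ the smallest singular value. *)

theory Defs
  imports "HOL-Probability.Probability"
begin

definition spec_norm :: "real^'c^'r \<Rightarrow> real" where
  "spec_norm A = onorm (\<lambda>x. A *v x)"

definition sigma_min :: "real^'c^'r \<Rightarrow> real" where
  "sigma_min A = Inf {norm (A *v x) | x. norm x = 1}"

definition proj :: "real^'q^'n \<Rightarrow> real^'n^'n" where
  "proj Z = Z ** matrix_inv (transpose Z ** Z) ** transpose Z"

definition f1 :: "real \<Rightarrow> real \<Rightarrow> real" where
  "f1 e1 e2 = (e1 + e2 * (e2 + 2)) / (1 - e1)"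

definition thin_svd :: "real^'c^'r \<Rightarrow> real^'c^'r \<Rightarrow> real^'c^'c \<Rightarrow> real^'c^'c \<Rightarrow> bool" where
  "thin_svd A U S V \<longleftrightarrow> transpose U ** U = mat 1 \<and>
     (\<forall>i j. i \<noteq> j \<longrightarrow> S $ i $ j = 0) \<and> (\<forall>i. S $ i $ i \<ge> 0) \<and>
     transpose V ** V = mat 1 \<and> V ** transpose V = mat 1 \<and>
     A = U ** S ** transpose V"

end

theory Submission
  imports Defs
begin

lemma adj: "(transpose A *v x) \<bullet> y = x \<bullet> ((A::real^'a^'b) *v y)"
  by (simp add: dot_lmul_matrix)

lemma specb: "norm ((A::real^'a^'b) *v x) \<le> spec_norm A * norm x"
  unfolding spec_norm_def by (rule onorm) simp

lemma orth_iso: assumes "transpose U ** U = mat 1" shows "norm ((U::real^'a^'b) *v x) = norm x"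
proof -
  have "(U *v x) \<bullet> (U *v x) = x \<bullet> x"
    using adj[of U "U *v x" x, symmetric] assms
    by (metis matrix_vector_mul_assoc matrix_vector_mul_lid)
  then show ?thesis by (metis norm_eq_sqrt_inner)
qed

lemma orth_contr: assumes "transpose U ** U = mat 1" shows "norm (transpose (U::real^'a^'b) *v u) \<le> norm u"
proof -
  define c where "c = transpose U *v u"
  have "c \<bullet> c = (U *v c) \<bullet> u" unfolding c_def using adj[of U u] by (simp add: inner_commute)
  also have "\<dots> \<le> norm (U *v c) * norm u" by (rule norm_cauchy_schwarz)
  also have "\<dots> = norm c * norm u" using orth_iso[OF assms] by simp
  finally have "norm c * norm c \<le> norm c * norm u" by (simp add: power2_eq_square[symmetric] power2_norm_eq_inner)
  then show ?thesis unfolding c_def[symmetric]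
    by (metis mult_le_cancel_left_pos norm_ge_zero order_le_less mult_zero_left)
qed

lemma unit_set_ne: "{norm ((A::real^'a^'b) *v x) | x. norm x = 1} \<noteq> {}"
  using norm_axis_1 by blast

lemma sigma_nonneg: "0 \<le> sigma_min (A::real^'a^'b)"
  unfolding sigma_min_def by (rule cInf_greatest[OF unit_set_ne]) auto

lemma sigma_le: "norm x = 1 \<Longrightarrow> sigma_min (A::real^'a^'b) \<le> norm (A *v x)"
  unfolding sigma_min_def by (rule cInf_lower) (auto intro: bdd_belowI[where m=0])

lemma sigma_ge: "(\<And>x. norm x = 1 \<Longrightarrow> c \<le> norm (A *v x)) \<Longrightarrow> c \<le> sigma_min (A::real^'a^'b)"
  unfolding sigma_min_def by (rule cInf_greatest[OF unit_set_ne]) auto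

lemma inv_near_id:
  fixes G :: "real^'a^'a"
  assumes "\<And>u. norm ((G - mat 1) *v u) \<le> e * norm u" "e < 1"
  shows "invertible G"
proof -
  have "\<forall>x. G *v x = 0 \<longrightarrow> x = 0"
  proof (intro allI impI)
    fix x assume "G *v x = 0"
    then have "(G - mat 1) *v x = - x" by (simp add: matrix_vector_mult_diff_rdistrib)
    then have "norm x \<le> e * norm x" using assms(1)[of x] by simp
    then show "x = 0" using assms(2)
      by (metis mult_le_cancel_right1 norm_ge_zero norm_le_zero_iff not_le order_le_less)
  qed
  then show ?thesis using matrix_left_invertible_ker invertible_left_inverse by blast
qed

lemma inv_right: assumes "invertible (G::real^'a^'a)" shows "G *v (matrix_inv G *v v) = v"
proof -
  have "G ** matrix_inv G = mat 1 \<and> matrix_inv G ** G = mat 1"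
    unfolding matrix_inv_def using assms unfolding invertible_def by (rule someI_ex)
  then show ?thesis by (metis matrix_vector_mul_assoc matrix_vector_mul_lid)
qed


lemma core:
  fixes UX :: "real^'p^'n" and UZ :: "real^'q^'n" and P :: "real^'n^'m"
  defines "S \<equiv> transpose P ** P"
  assumes oX: "transpose UX ** UX = mat 1" and oZ: "transpose UZ ** UZ = mat 1"
    and e1: "0 < e1" "e1 < 1/2" and e2: "0 < e2"
    and h1: "spec_norm (transpose UZ ** S ** UZ - mat 1) \<le> e1"
    and h2: "spec_norm (transpose UZ ** S ** UX - transpose UZ ** UX) \<le> e2"
    and hs: "(sigma_min (transpose UZ ** UX))\<^sup>2 \<ge> 2 * f1 e1 e2"
  shows "sigma_min (transpose UX ** S ** UZ ** matrix_inv (transpose UZ ** S ** UZ)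
                          ** transpose UZ ** S ** UX) \<ge> (1/2) * (sigma_min (transpose UZ ** UX))\<^sup>2"
proof -
  define G where "G = transpose UZ ** S ** UZ"
  define C where "C = transpose UZ ** S ** UX"
  define B where "B = transpose UZ ** UX"
  define Gi where "Gi = matrix_inv G"
  define \<sigma> where "\<sigma> = sigma_min B"
  have St: "transpose S = S" unfolding S_def by (simp add: matrix_transpose_mul)
  have Ct: "transpose C = transpose UX ** S ** UZ"
    unfolding C_def by (simp add: matrix_transpose_mul St matrix_mul_assoc)
  have At: "transpose UX ** S ** UZ ** Gi ** transpose UZ ** S ** UX = transpose C ** Gi ** C"
    unfolding Ct unfolding C_def by (simp add: matrix_mul_assoc)
  have Gb: "norm ((G - mat 1) *v u) \<le> e1 * norm u" for u
    using specb[of "G - mat 1" u] h1 unfolding G_def by (meson mult_right_mono norm_ge_zero order_trans)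
  have Db: "norm ((C - B) *v u) \<le> e2 * norm u" for u
    using specb[of "C - B" u] h2 unfolding C_def B_def by (meson mult_right_mono norm_ge_zero order_trans)
  have invG: "invertible G" using inv_near_id[OF Gb] e1 by simp
  have f1e: "f1 e1 e2 = e1/(1-e1) + e2*(e2+2)/(1-e1)" unfolding f1_def by (simp add: add_divide_distrib)
  have s0: "0 \<le> \<sigma>" unfolding \<sigma>_def by (rule sigma_nonneg)
  have key: "\<sigma>\<^sup>2 - f1 e1 e2 \<le> norm ((transpose C ** Gi ** C) *v x)" if x1: "norm x = 1" for x
  proof -
    define v where "v = C *v x"
    define w where "w = Gi *v v"
    define a where "a = norm (B *v x)"
    have Gw: "G *v w = v" unfolding w_def Gi_def by (rule inv_right[OF invG])
    have a1: "a \<le> 1" unfolding a_def B_def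
      using orth_contr[OF oZ, of "UX *v x"] orth_iso[OF oX, of x] x1
      by (simp add: matrix_vector_mul_assoc[symmetric] del: transpose_matrix_vector)
    have sa: "\<sigma> \<le> a" unfolding a_def \<sigma>_def using sigma_le[OF x1] .
    have dx: "norm ((C - B) *v x) \<le> e2" using Db[of x] x1 by simp
    have vdec: "v = B *v x + (C - B) *v x" unfolding v_def by (simp add: matrix_vector_mult_diff_rdistrib)
    have "v \<bullet> v = (B *v x) \<bullet> (B *v x) + 2 * ((B *v x) \<bullet> ((C - B) *v x)) + ((C - B) *v x) \<bullet> ((C - B) *v x)"
      unfolding vdec by (simp add: inner_add_left inner_add_right inner_commute)
    moreover have "\<bar>(B *v x) \<bullet> ((C - B) *v x)\<bar> \<le> a * e2"
      unfolding a_def using Cauchy_Schwarz_ineq2 dx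
      by (meson mult_left_mono norm_ge_zero order_trans)
    moreover have "0 \<le> ((C - B) *v x) \<bullet> ((C - B) *v x)" by simp
    moreover have "a * e2 \<le> e2" using a1 e2 by (simp add: mult_left_le_one_le a_def)
    moreover have "(B *v x) \<bullet> (B *v x) = a\<^sup>2" unfolding a_def by (simp add: power2_norm_eq_inner)
    moreover have "v \<bullet> v = (norm v)\<^sup>2" by (simp add: power2_norm_eq_inner)
    ultimately have vv: "(norm v)\<^sup>2 \<ge> a\<^sup>2 - 2 * e2" by linarith
    have wv: "w - v = - ((G - mat 1) *v w)" using Gw by (simp add: matrix_vector_mult_diff_rdistrib)
    have nwv: "norm (w - v) \<le> e1 * norm w" using Gb[of w] wv by simp
    have "norm w \<le> norm v + norm (w - v)" by (metis add.commute diff_add_cancel norm_triangle_ineq)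
    then have "(1 - e1) * norm w \<le> norm v" using nwv by (simp add: algebra_simps)
    then have nw: "norm w \<le> norm v / (1 - e1)" using e1 by (simp add: field_simps)
    have nwv2: "norm (w - v) \<le> e1 / (1 - e1) * norm v"
    proof -
      have "e1 * norm w \<le> e1 * (norm v / (1 - e1))" using nw e1 by (intro mult_left_mono) auto
      then show ?thesis using nwv by simp
    qed
    have "v \<bullet> w = v \<bullet> v + v \<bullet> (w - v)" by (simp add: inner_diff_right)
    moreover have "\<bar>v \<bullet> (w - v)\<bar> \<le> norm v * (e1 / (1 - e1) * norm v)"
      using Cauchy_Schwarz_ineq2 nwv2 by (meson mult_left_mono norm_ge_zero order_trans)
    moreover have fac: "0 \<le> (1 - 2*e1) / (1 - e1)" "(1 - 2*e1) / (1 - e1) = 1 - e1/(1-e1)" using e1 by (auto simp: field_simps)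
    moreover have "v \<bullet> v = (norm v)\<^sup>2" by (simp add: power2_norm_eq_inner)
    ultimately have vw: "v \<bullet> w \<ge> (norm v)\<^sup>2 * ((1 - 2*e1) / (1 - e1))"
    proof -
      assume A: "v \<bullet> w = v \<bullet> v + v \<bullet> (w - v)"
        "\<bar>v \<bullet> (w - v)\<bar> \<le> norm v * (e1 / (1 - e1) * norm v)"
        "0 \<le> (1 - 2*e1) / (1 - e1)" "(1 - 2*e1) / (1 - e1) = 1 - e1/(1-e1)"
        "v \<bullet> v = (norm v)\<^sup>2"
      have "norm v * (e1 / (1 - e1) * norm v) = (norm v)\<^sup>2 * (e1/(1-e1))"
        by (simp add: power2_eq_square)
      then have "v \<bullet> (w - v) \<ge> - ((norm v)\<^sup>2 * (e1/(1-e1)))" using A(2) by linarith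
      then show ?thesis unfolding A(4) using A(1,5) by (simp add: right_diff_distrib)
    qed
    have "(a\<^sup>2 - 2 * e2) * ((1 - 2*e1) / (1 - e1)) \<le> v \<bullet> w"
      using vw mult_right_mono[OF vv fac(1)] by linarith
    moreover have "a\<^sup>2 - f1 e1 e2 \<le> (a\<^sup>2 - 2 * e2) * ((1 - 2*e1) / (1 - e1))"
    proof -
      have "a\<^sup>2 \<le> 1" using a1 sa s0 by (simp add: power_le_one)
      moreover have "0 \<le> e1/(1-e1)" using e1 by simp
      ultimately have "a\<^sup>2 * (e1/(1-e1)) \<le> e1/(1-e1)" by (metis mult_left_le_one_le zero_le_power2 mult.commute)
      moreover have "2*e2 * (1 - e1/(1-e1)) \<le> e2*(e2+2)/(1-e1)"
      proof -
        have h1: "e1 * (e2 * e2) \<le> e2 * e2" using e1 mult_right_mono[of e1 1 "e2*e2"] by simp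
        have h0: "e1 * (e2 * 4) \<le> e2 * 4" using e1 e2 mult_right_mono[of e1 1 "e2*4"] by simp
        have h2: "e1 * (e1 * (e2 * 4)) \<le> e1 * (e2 * 4)" using e1 mult_left_mono[OF h0, of e1] by simp
        show ?thesis using e1 e2 apply (simp add: field_simps) using h1 h2 by linarith
      qed
      ultimately show ?thesis unfolding fac(2) f1e by (simp add: algebra_simps)
    qed
    moreover have "\<sigma>\<^sup>2 \<le> a\<^sup>2" using sa s0 by (simp add: power_mono)
    moreover have "x \<bullet> ((transpose C ** Gi ** C) *v x) = v \<bullet> w"
      unfolding v_def w_def using adj[of "transpose C" x]
      by (simp add: matrix_vector_mul_assoc[symmetric] del: transpose_matrix_vector)
    moreover have "x \<bullet> ((transpose C ** Gi ** C) *v x) \<le> norm ((transpose C ** Gi ** C) *v x)"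
      using norm_cauchy_schwarz[of x] x1 by simp
    ultimately show ?thesis by linarith
  qed
  have "\<sigma>\<^sup>2 - f1 e1 e2 \<le> sigma_min (transpose C ** Gi ** C)" by (rule sigma_ge[OF key])
  moreover have "(1/2) * \<sigma>\<^sup>2 \<le> \<sigma>\<^sup>2 - f1 e1 e2" using hs unfolding \<sigma>_def B_def by simp
  ultimately have "(1/2) * \<sigma>\<^sup>2 \<le> sigma_min (transpose C ** Gi ** C)" by linarith
  moreover have "transpose UX ** S ** UZ ** matrix_inv (transpose UZ ** S ** UZ) ** transpose UZ ** S ** UX = transpose C ** Gi ** C"
    using At unfolding Gi_def G_def .
  ultimately show ?thesis unfolding \<sigma>_def B_def by simp
qed


theorem lemmaB5:
  fixes M :: "'w measure"
    and y :: "real^'n" and X :: "real^'p^'n" and Z :: "real^'q^'n"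
    and UX :: "real^'p^'n" and SX :: "real^'p^'p" and VX :: "real^'p^'p"
    and UZ :: "real^'q^'n" and SZ :: "real^'q^'q" and VZ :: "real^'q^'q"
    and Pi :: "'w \<Rightarrow> real^'n^'m"
    and e1 e2 e3 \<delta> :: real
  assumes "prob_space M"
    and "invertible (transpose Z ** Z)"
    and "invertible (transpose X ** proj Z ** X)"
    and "thin_svd X UX SX VX"
    and "thin_svd Z UZ SZ VZ"
    and "e1 \<in> {0<..<1/2}" and "e2 \<in> {0<..<1/2}" and "e3 \<in> {0<..<1/2}" and "\<delta> \<in> {0<..<1/2}"
    and "\<exists>E \<in> sets M. measure M E \<ge> 1 - \<delta> \<and>
          (\<forall>\<omega>\<in>E. let S = transpose (Pi \<omega>) ** Pi \<omega>;
                     beta = matrix_inv (transpose X ** proj Z ** X) *v (transpose X ** proj Z *v y);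
                     e = y - X *v beta
                 in spec_norm (transpose UZ ** S ** UZ - mat 1) \<le> e1 \<and>
                    spec_norm (transpose UZ ** S ** UX - transpose UZ ** UX) \<le> e2 \<and>
                    norm (transpose UZ *v (S *v e) - transpose UZ *v e) \<le> e3 * norm e)"
    and "(sigma_min (transpose UZ ** UX))\<^sup>2 \<ge> 2 * f1 e1 e2"
  shows "\<exists>E \<in> sets M. measure M E \<ge> 1 - \<delta> \<and>
          (\<forall>\<omega>\<in>E. let S = transpose (Pi \<omega>) ** Pi \<omega>;
                     At = transpose UX ** S ** UZ ** matrix_inv (transpose UZ ** S ** UZ)
                          ** transpose UZ ** S ** UX
                 in sigma_min At \<ge> (1/2) * (sigma_min (transpose UZ ** UX))\<^sup>2)"
proof -
  obtain E where E: "E \<in> sets M" "measure M E \<ge> 1 - \<delta>" and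
    H: "\<forall>\<omega>\<in>E. let S = transpose (Pi \<omega>) ** Pi \<omega>;
                     beta = matrix_inv (transpose X ** proj Z ** X) *v (transpose X ** proj Z *v y);
                     e = y - X *v beta
                 in spec_norm (transpose UZ ** S ** UZ - mat 1) \<le> e1 \<and>
                    spec_norm (transpose UZ ** S ** UX - transpose UZ ** UX) \<le> e2 \<and>
                    norm (transpose UZ *v (S *v e) - transpose UZ *v e) \<le> e3 * norm e"
    using assms(10) by blast
  have oX: "transpose UX ** UX = mat 1" using assms(4) unfolding thin_svd_def by blast
  have oZ: "transpose UZ ** UZ = mat 1" using assms(5) unfolding thin_svd_def by blast
  show ?thesis
  proof (intro bexI[OF _ E(1)] conjI ballI E(2))
    fix \<omega> assume w: "\<omega> \<in> E"
    have h1: "spec_norm (transpose UZ ** (transpose (Pi \<omega>) ** Pi \<omega>) ** UZ - mat 1) \<le> e1"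
     and h2: "spec_norm (transpose UZ ** (transpose (Pi \<omega>) ** Pi \<omega>) ** UX - transpose UZ ** UX) \<le> e2"
      using H w unfolding Let_def by auto
    show "let S = transpose (Pi \<omega>) ** Pi \<omega>;
                     At = transpose UX ** S ** UZ ** matrix_inv (transpose UZ ** S ** UZ)
                          ** transpose UZ ** S ** UX
                 in sigma_min At \<ge> (1/2) * (sigma_min (transpose UZ ** UX))\<^sup>2"
      unfolding Let_def using core[OF oX oZ _ _ _ h1 h2 assms(11)] assms(6,7) by simp
  qed
qed

end
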